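(* Let $R$ be a lattice diagram of a knot or link. (1) If two problem crossings of $R$ are adjacent in the crossing graph $C(R)$ but are not adjacent in the problem crossing graph $PC(R)$, then neither is a bad neighbor of the other, and they have the same crossing type. (2) If $R$ does not have a Celtic configuration, then $PC(R)$ has every vertex of degree at most $2$, is deleted-square free, and every connected component of $PC(R)$ that is a cycle has a vertex that is not a corner of $PC(R)$.
   Context: A lattice diagram of a knot or link is a knot or link diagram (with over/under information at finitely many transverse double points, the crossings) contained in the $\mathbb{Z}^2$ lattice (vertices the integer points, edges the unit segments parallel to the axes) with all crossings at lattice vertices. At a crossing $c$, the $x$-strand (resp. $y$-strand) is the union of the two horizontal (resp. vertical) lattice edges of $R$ with endpoint $c$; $c$ is an $x$-crossing (resp. $y$-crossing) if the over-strand is the $x$-strand (resp. $y$-strand); this is its crossing type. The crossing graph $C(R)$ is the subgraph of the $\mathbb{Z}^2$ lattice with a vertex at each crossing of $R$ and an edge between any two crossings at lattice distance $1$. In a subgraph $G$ of the $\mathbb{Z}^2$ lattice, two vertices are adjacent if joined by an edge of $G$; two neighbors $a,b$ of a vertex $v$ are nearby neighbors if edges $va$, $vb$ are perpendicular and opposing neighbors if parallel; $v$ is a corner of $G$ if it has exactly two neighbors in $G$ and they are nearby neighbors; $G$ is deleted-square free if it does not contain three edges of a single unit square of the $\mathbb{Z}^2$ lattice. A crossing $c$ is a problem crossing if it has a pair of nearby neighbors in $C(R)$ both of crossing type opposite to that of $c$; any crossing in such a pair is a bad neighbor of $c$. The problem crossing graph $PC(R)$ is the subgraph of $C(R)$ whose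 vertices are the problem crossings and with an edge between two problem crossings that are bad neighbors of each other. A Celtic configuration is a set of four crossings at the four vertices of a unit square of the $\mathbb{Z}^2$ lattice such that any two of them joined by a side of the square have opposite crossing types. *)

theory Defs
  imports Main
begin

type_synonym pt = "int \<times> int"

text \<open>Crossing type: x-crossing (over-strand horizontal) or y-crossing (over-strand vertical).\<close>
datatype ctype = XCross | YCross

definition ladj :: "pt \<Rightarrow> pt \<Rightarrow> bool" where
  "ladj p q \<longleftrightarrow> \<bar>fst p - fst q\<bar> + \<bar>snd p - snd q\<bar> = 1"

text \<open>At each lattice vertex the diagram
  has degree 0, 2 (ordinary point, possibly a turn) or 4 (a crossing, where the horizontal
  and vertical strands cross transversally).  The over/under information is a separate
  function assigning a crossing type to each crossing.\<close>
definition lattice_diagram :: "pt set set \<Rightarrow> bool" where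
  "lattice_diagram E \<longleftrightarrow> finite E \<and> E \<noteq> {} \<and>
     (\<forall>e\<in>E. \<exists>p q. e = {p, q} \<and> ladj p q) \<and>
     (\<forall>v. card {e\<in>E. v \<in> e} \<in> {0, 2, 4})"

definition crossings :: "pt set set \<Rightarrow> pt set" where
  "crossings E = {v. card {e\<in>E. v \<in> e} = 4}"

definition cadj :: "pt set set \<Rightarrow> pt \<Rightarrow> pt \<Rightarrow> bool" where
  "cadj E c d \<longleftrightarrow> c \<in> crossings E \<and> d \<in> crossings E \<and> ladj c d"

definition perp_at :: "pt \<Rightarrow> pt \<Rightarrow> pt \<Rightarrow> bool" where
  "perp_at v a b \<longleftrightarrow> ladj v a \<and> ladj v b \<and>
     (fst a - fst v) * (fst b - fst v) + (snd a - snd v) * (snd b - snd v) = 0"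

definition bad_pair :: "pt set set \<Rightarrow> (pt \<Rightarrow> ctype) \<Rightarrow> pt \<Rightarrow> pt \<Rightarrow> pt \<Rightarrow> bool" where
  "bad_pair E ty c a b \<longleftrightarrow> cadj E c a \<and> cadj E c b \<and> perp_at c a b \<and>
     ty a \<noteq> ty c \<and> ty b \<noteq> ty c"

definition problem_crossing :: "pt set set \<Rightarrow> (pt \<Rightarrow> ctype) \<Rightarrow> pt \<Rightarrow> bool" where
  "problem_crossing E ty c \<longleftrightarrow> c \<in> crossings E \<and> (\<exists>a b. bad_pair E ty c a b)"

definition bad_neighbor :: "pt set set \<Rightarrow> (pt \<Rightarrow> ctype) \<Rightarrow> pt \<Rightarrow> pt \<Rightarrow> bool" where
  "bad_neighbor E ty c d \<longleftrightarrow> problem_crossing E ty c \<and> (\<exists>b. bad_pair E ty c d b \<or> bad_pair E ty c b d)"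

definition pc_vert :: "pt set set \<Rightarrow> (pt \<Rightarrow> ctype) \<Rightarrow> pt set" where
  "pc_vert E ty = {c. problem_crossing E ty c}"

definition pc_adj :: "pt set set \<Rightarrow> (pt \<Rightarrow> ctype) \<Rightarrow> pt \<Rightarrow> pt \<Rightarrow> bool" where
  "pc_adj E ty c d \<longleftrightarrow> cadj E c d \<and> problem_crossing E ty c \<and> problem_crossing E ty d \<and>
     bad_neighbor E ty c d \<and> bad_neighbor E ty d c"

definition pc_degree :: "pt set set \<Rightarrow> (pt \<Rightarrow> ctype) \<Rightarrow> pt \<Rightarrow> nat" where
  "pc_degree E ty v = card {w. pc_adj E ty v w}"

definition pc_corner :: "pt set set \<Rightarrow> (pt \<Rightarrow> ctype) \<Rightarrow> pt \<Rightarrow> bool" where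
  "pc_corner E ty v \<longleftrightarrow> v \<in> pc_vert E ty \<and>
     (\<exists>a b. a \<noteq> b \<and> {w. pc_adj E ty v w} = {a, b} \<and> perp_at v a b)"

definition square_sides :: "pt \<Rightarrow> (pt \<times> pt) set" where
  "square_sides p = (let (i, j) = p in
     {((i, j), (i + 1, j)), ((i + 1, j), (i + 1, j + 1)),
      ((i + 1, j + 1), (i, j + 1)), ((i, j + 1), (i, j))})"

definition pc_deleted_square_free :: "pt set set \<Rightarrow> (pt \<Rightarrow> ctype) \<Rightarrow> bool" where
  "pc_deleted_square_free E ty \<longleftrightarrow>
     (\<forall>p. \<not> (\<exists>S \<subseteq> square_sides p. card S = 3 \<and> (\<forall>(a, b)\<in>S. pc_adj E ty a b)))"

definition pc_component :: "pt set set \<Rightarrow> (pt \<Rightarrow> ctype) \<Rightarrow> pt \<Rightarrow> pt set" where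
  "pc_component E ty v = {w. (pc_adj E ty)\<^sup>*\<^sup>* v w}"

text \<open>A set K of vertices (a component, so its edges are all PC edges inside K) forms a cycle.\<close>
definition pc_is_cycle :: "pt set set \<Rightarrow> (pt \<Rightarrow> ctype) \<Rightarrow> pt set \<Rightarrow> bool" where
  "pc_is_cycle E ty K \<longleftrightarrow> (\<exists>vs. distinct vs \<and> length vs \<ge> 3 \<and> set vs = K \<and>
     (\<forall>a\<in>K. \<forall>b\<in>K. pc_adj E ty a b \<longleftrightarrow>
        (\<exists>i<length vs. {a, b} = {vs ! i, vs ! ((i + 1) mod length vs)})))"

definition celtic_configuration :: "pt set set \<Rightarrow> (pt \<Rightarrow> ctype) \<Rightarrow> bool" where
  "celtic_configuration E ty \<longleftrightarrow> (\<exists>i j.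
     (i, j) \<in> crossings E \<and> (i + 1, j) \<in> crossings E \<and>
     (i + 1, j + 1) \<in> crossings E \<and> (i, j + 1) \<in> crossings E \<and>
     ty (i, j) \<noteq> ty (i + 1, j) \<and> ty (i + 1, j) \<noteq> ty (i + 1, j + 1) \<and>
     ty (i + 1, j + 1) \<noteq> ty (i, j + 1) \<and> ty (i, j + 1) \<noteq> ty (i, j))"

end

theory Submission
  imports Defs
begin


lemma ladj_iff: "ladj p q \<longleftrightarrow> (fst q = fst p + 1 \<and> snd q = snd p) \<or> (fst q = fst p - 1 \<and> snd q = snd p)
   \<or> (fst q = fst p \<and> snd q = snd p + 1) \<or> (fst q = fst p \<and> snd q = snd p - 1)"
  unfolding ladj_def by (auto simp: abs_if)

lemma ladj_sym: "ladj p q = ladj q p"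
  unfolding ladj_def by (simp add: abs_minus_commute)

lemma cadj_sym: "cadj E c d = cadj E d c"
  unfolding cadj_def using ladj_sym by blast

lemma perp_sym: "perp_at v a b = perp_at v b a"
  unfolding perp_at_def by (auto simp: mult.commute)

lemma pc_adj_sym: "pc_adj E ty c d = pc_adj E ty d c"
  unfolding pc_adj_def using cadj_sym by blast

lemma pc_adj_ty: "pc_adj E ty c d \<Longrightarrow> ty c \<noteq> ty d"
  unfolding pc_adj_def bad_neighbor_def bad_pair_def by auto

lemma pc_adj_cross: "pc_adj E ty c d \<Longrightarrow> c \<in> crossings E \<and> d \<in> crossings E \<and> ladj c d"
  unfolding pc_adj_def cadj_def by auto

lemma ct3: "(x::ctype) \<noteq> y \<Longrightarrow> y \<noteq> z \<Longrightarrow> x = z"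
  by (cases x; cases y; cases z) auto

lemma celtic_sq:
  assumes "A \<in> crossings E" "B \<in> crossings E" "C \<in> crossings E" "D \<in> crossings E"
    "perp_at A B D" "C = (fst B + fst D - fst A, snd B + snd D - snd A)"
    "ty A \<noteq> ty B" "ty A \<noteq> ty D" "ty C \<noteq> ty B \<or> ty C \<noteq> ty D"
  shows "celtic_configuration E ty"
proof -
  have tC: "ty C = ty A" using assms(7-9) ct3 by metis
  have tD: "ty D = ty B" using assms(7,8) ct3 by metis
  obtain ax ay where Ae: "A = (ax, ay)" by (cases A)
  obtain bx by' where Be: "B = (bx, by')" by (cases B)
  obtain dx dy where De: "D = (dx, dy)" by (cases D)
  have L: "ladj A B" "ladj A D" and P: "(bx - ax) * (dx - ax) + (by' - ay) * (dy - ay) = 0"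
    using assms(5) unfolding perp_at_def Ae Be De by auto
  show ?thesis
    unfolding celtic_configuration_def
    apply (rule exI[of _ "min ax (bx + dx - ax)"], rule exI[of _ "min ay (by' + dy - ay)"])
    using L P assms(1-4,7,8) tC tD unfolding assms(6) Ae Be De ladj_iff
    by (auto simp: algebra_simps)
qed



definition unitv :: "int \<Rightarrow> int \<Rightarrow> bool" where
  "unitv x y \<longleftrightarrow> (x = 1 \<and> y = 0) \<or> (x = -1 \<and> y = 0) \<or> (x = 0 \<and> y = 1) \<or> (x = 0 \<and> y = -1)"

lemma ladj_unit: "ladj p q \<longleftrightarrow> unitv (fst q - fst p) (snd q - snd p)"
  unfolding ladj_def unitv_def by (auto simp: abs_if)

lemma u_perp3: "unitv ex ey \<Longrightarrow> unitv fx fy \<Longrightarrow> unitv gx gy \<Longrightarrow> ex * fx + ey * fy = 0 \<Longrightarrow>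
  gx * ex + gy * ey = 0 \<or> gx * fx + gy * fy = 0"
  unfolding unitv_def by auto

lemma u_par: "unitv ex ey \<Longrightarrow> unitv fx fy \<Longrightarrow> unitv gx gy \<Longrightarrow> ex * fx + ey * fy = 0 \<Longrightarrow>
  fx * gx + fy * gy = 0 \<Longrightarrow> (gx = ex \<and> gy = ey) \<or> (gx = - ex \<and> gy = - ey)"
  unfolding unitv_def by auto

lemma perp3:
  assumes "perp_at d a b" "ladj d c"
  shows "perp_at d c a \<or> perp_at d c b"
  using assms u_perp3[of "fst a - fst d" "snd a - snd d" "fst b - fst d" "snd b - snd d" "fst c - fst d" "snd c - snd d"]
  unfolding perp_at_def ladj_unit by auto

lemma bn:
  assumes "problem_crossing E ty d" "c \<in> crossings E" "ladj d c" "ty c \<noteq> ty d"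
  shows "bad_neighbor E ty d c"
proof -
  obtain a b where ab: "bad_pair E ty d a b" using assms(1) unfolding problem_crossing_def by blast
  have dc: "d \<in> crossings E" using assms(1) unfolding problem_crossing_def by blast
  have "perp_at d c a \<or> perp_at d c b" using ab assms(3) perp3 unfolding bad_pair_def by blast
  then have "bad_pair E ty d c a \<or> bad_pair E ty d c b"
    using ab assms dc unfolding bad_pair_def cadj_def by auto
  then show ?thesis using assms(1) unfolding bad_neighbor_def by blast
qed

lemma part1:
  assumes "problem_crossing E ty c" "problem_crossing E ty d" "cadj E c d" "\<not> pc_adj E ty c d"
  shows "\<not> bad_neighbor E ty c d \<and> \<not> bad_neighbor E ty d c \<and> ty c = ty d"
proof -
  have cc: "c \<in> crossings E" "d \<in> crossings E" "ladj c d" "ladj d c"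
    using assms(3) ladj_sym unfolding cadj_def by auto
  have bt: "bad_neighbor E ty x y \<Longrightarrow> ty x \<noteq> ty y" for x y
    unfolding bad_neighbor_def bad_pair_def by auto
  have t: "ty c = ty d"
  proof (rule ccontr)
    assume "ty c \<noteq> ty d"
    then have "bad_neighbor E ty c d" "bad_neighbor E ty d c" using bn assms cc by metis+
    then show False using assms unfolding pc_adj_def by blast
  qed
  then show ?thesis using bt by metis
qed

lemma no_fourth:
  assumes "\<not> celtic_configuration E ty" "pc_adj E ty v w" "pc_adj E ty v u" "perp_at v w u"
    "b \<in> crossings E" "ty b \<noteq> ty w" "b = (fst w + fst u - fst v, snd w + snd u - snd v)"
  shows False
  using celtic_sq[of v E w b u ty] assms pc_adj_cross pc_adj_ty by metis

lemma partner:
  assumes "pc_adj E ty w v"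
  obtains p where "p \<in> crossings E" "perp_at w v p" "ty p \<noteq> ty w"
proof -
  from assms obtain p where "bad_pair E ty w v p \<or> bad_pair E ty w p v"
    unfolding pc_adj_def bad_neighbor_def by blast
  then show thesis using that perp_sym unfolding bad_pair_def cadj_def by blast
qed

lemma triple:
  assumes nc: "\<not> celtic_configuration E ty" and "pc_adj E ty v w" "pc_adj E ty v a" "pc_adj E ty v b"
    "perp_at v w a" "b = (2 * fst v - fst a, 2 * snd v - snd a)"
  shows False
proof -
  obtain p where p: "p \<in> crossings E" "perp_at w v p" "ty p \<noteq> ty w"
    using partner assms(2) pc_adj_sym by metis
  have pb: "perp_at v w b" using assms(5,6) unfolding perp_at_def ladj_iff by auto
  have "p = (fst w + fst a - fst v, snd w + snd a - snd v) \<or> p = (fst w + fst b - fst v, snd w + snd b - snd v)"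
    using assms(5,6) p(2) u_par[of "fst a - fst v" "snd a - snd v" "fst w - fst v" "snd w - snd v"
        "fst p - fst w" "snd p - snd w"]
    unfolding perp_at_def ladj_unit by (auto simp: prod_eq_iff algebra_simps)
  then show False using no_fourth[OF nc] assms p pb by metis
qed



lemma card2: "N \<subseteq> {a, b} \<Longrightarrow> card N \<le> 2"
proof -
  assume "N \<subseteq> {a, b}"
  then have "card N \<le> card {a, b}" by (intro card_mono) auto
  also have "\<dots> \<le> 2" by (cases "a = b") auto
  finally show ?thesis .
qed

lemma deg:
  assumes nc: "\<not> celtic_configuration E ty"
  shows "card {w. pc_adj E ty v w} \<le> 2"
proof -
  obtain x y where ve: "v = (x, y)" by (cases v)
  define N where "N = {w. pc_adj E ty v w}"
  define R where "R = (x + 1, y)"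
  define L where "L = (x - 1, y)"
  define U where "U = (x, y + 1)"
  define D where "D = (x, y - 1)"
  have sub: "N \<subseteq> {R, L, U, D}"
  proof
    fix w assume "w \<in> N"
    then have "ladj v w" using pc_adj_cross unfolding N_def by blast
    then show "w \<in> {R, L, U, D}" unfolding ladj_iff ve R_def L_def U_def D_def
      by (cases w) auto
  qed
  have dist: "R \<noteq> L" "U \<noteq> D" "R \<noteq> U" "R \<noteq> D" "L \<noteq> U" "L \<noteq> D"
    unfolding R_def L_def U_def D_def by auto
  have pp: "perp_at v U R" "perp_at v D R" "perp_at v R U" "perp_at v L U"
    unfolding ve R_def U_def D_def L_def perp_at_def ladj_iff by auto
  have refl: "L = (2 * fst v - fst R, 2 * snd v - snd R)" "D = (2 * fst v - fst U, 2 * snd v - snd U)"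
    unfolding ve R_def U_def D_def L_def by auto
  have e1: "\<not> (R \<in> N \<and> L \<in> N \<and> U \<in> N)"
    using triple[OF nc _ _ _ pp(1) refl(1)] unfolding N_def by blast
  have e2: "\<not> (R \<in> N \<and> L \<in> N \<and> D \<in> N)"
    using triple[OF nc _ _ _ pp(2) refl(1)] unfolding N_def by blast
  have e3: "\<not> (U \<in> N \<and> D \<in> N \<and> R \<in> N)"
    using triple[OF nc _ _ _ pp(3) refl(2)] unfolding N_def by blast
  have e4: "\<not> (U \<in> N \<and> D \<in> N \<and> L \<in> N)"
    using triple[OF nc _ _ _ pp(4) refl(2)] unfolding N_def by blast
  have "\<exists>a b. N \<subseteq> {a, b}"
  proof (cases "R \<in> N \<and> L \<in> N")
    case True
    then have "N \<subseteq> {R, L}" using sub e1 e2 by auto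
    then show ?thesis by blast
  next
    case nRL: False
    show ?thesis
    proof (cases "U \<in> N \<and> D \<in> N")
      case True
      then have "N \<subseteq> {U, D}" using sub e3 e4 by auto
      then show ?thesis by blast
    next
      case nUD: False
      have "N \<subseteq> {if R \<in> N then R else L, if U \<in> N then U else D}"
      proof
        fix w assume w: "w \<in> N"
        then have "w \<in> {R, L, U, D}" using sub by blast
        then show "w \<in> {if R \<in> N then R else L, if U \<in> N then U else D}"
          using w nRL nUD by (cases "R \<in> N"; cases "U \<in> N") auto
      qed
      then show ?thesis by blast
    qed
  qed
  then obtain a b where "N \<subseteq> {a, b}" by blast
  then have "card N \<le> 2" by (rule card2)
  then show ?thesis by (simp add: N_def)
qed


lemma celtic_intro:
  "(i, j) \<in> crossings E \<Longrightarrow> (i + 1, j) \<in> crossings E \<Longrightarrow> (i + 1, j + 1) \<in> crossings E \<Longrightarrow>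
   (i, j + 1) \<in> crossings E \<Longrightarrow> ty (i, j) \<noteq> ty (i + 1, j) \<Longrightarrow> ty (i + 1, j) \<noteq> ty (i + 1, j + 1) \<Longrightarrow>
   ty (i + 1, j + 1) \<noteq> ty (i, j + 1) \<Longrightarrow> ty (i, j + 1) \<noteq> ty (i, j) \<Longrightarrow> celtic_configuration E ty"
  unfolding celtic_configuration_def by blast

lemma ct4: "(a::ctype) \<noteq> b \<Longrightarrow> b \<noteq> c \<Longrightarrow> c \<noteq> d \<Longrightarrow> d \<noteq> a"
  by (cases a; cases b; cases c; cases d) auto

lemma four:
  assumes "pc_adj E ty a b" "pc_adj E ty b c" "pc_adj E ty c d"
  shows "a \<in> crossings E \<and> b \<in> crossings E \<and> c \<in> crossings E \<and> d \<in> crossings E \<and>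
    ty a \<noteq> ty b \<and> ty b \<noteq> ty c \<and> ty c \<noteq> ty d \<and> ty d \<noteq> ty a"
proof -
  have "ty a \<noteq> ty b" "ty b \<noteq> ty c" "ty c \<noteq> ty d" using assms pc_adj_ty by blast+
  moreover then have "ty d \<noteq> ty a" by (rule ct4)
  ultimately show ?thesis using assms pc_adj_cross by blast
qed

lemma dsq:
  assumes nc: "\<not> celtic_configuration E ty"
  shows "pc_deleted_square_free E ty"
  unfolding pc_deleted_square_free_def
proof (intro allI notI)
  fix p assume "\<exists>S\<subseteq>square_sides p. card S = 3 \<and> (\<forall>(a, b)\<in>S. pc_adj E ty a b)"
  then obtain S where S: "S \<subseteq> square_sides p" "card S = 3" "\<forall>(a, b)\<in>S. pc_adj E ty a b" by blast
  obtain i j where pe: "p = (i, j)" by (cases p)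
  define P0 where "P0 = (i, j)"
  define P1 where "P1 = (i + 1, j)"
  define P2 where "P2 = (i + 1, j + 1)"
  define P3 where "P3 = (i, j + 1)"
  have ss: "square_sides p = {(P0, P1), (P1, P2), (P2, P3), (P3, P0)}"
    unfolding pe square_sides_def P0_def P1_def P2_def P3_def by simp
  have no2: False if "S \<subseteq> {a, b}" for a b using card2[OF that] S(2) by simp
  have adj: "pc_adj E ty a b" if "(a, b) \<in> S" for a b using S(3) that by blast
  have "((P0, P1) \<in> S \<and> (P1, P2) \<in> S \<and> (P2, P3) \<in> S) \<or> ((P1, P2) \<in> S \<and> (P2, P3) \<in> S \<and> (P3, P0) \<in> S)
      \<or> ((P2, P3) \<in> S \<and> (P3, P0) \<in> S \<and> (P0, P1) \<in> S) \<or> ((P3, P0) \<in> S \<and> (P0, P1) \<in> S \<and> (P1, P2) \<in> S)"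
  proof (rule ccontr)
    assume a: "\<not> ?thesis"
    have "S \<subseteq> {(P0, P1), (P1, P2), (P2, P3), (P3, P0)}" using S(1) ss by simp
    then have "S \<subseteq> {(P0, P1), (P1, P2)} \<or> S \<subseteq> {(P0, P1), (P2, P3)} \<or> S \<subseteq> {(P0, P1), (P3, P0)}
      \<or> S \<subseteq> {(P1, P2), (P2, P3)} \<or> S \<subseteq> {(P1, P2), (P3, P0)} \<or> S \<subseteq> {(P2, P3), (P3, P0)}"
      using a by blast
    then show False using no2 by blast
  qed
  then show False
  proof (elim disjE conjE)
    assume "(P0, P1) \<in> S" "(P1, P2) \<in> S" "(P2, P3) \<in> S"
    then have "P0 \<in> crossings E \<and> P1 \<in> crossings E \<and> P2 \<in> crossings E \<and> P3 \<in> crossings E \<and>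
      ty P0 \<noteq> ty P1 \<and> ty P1 \<noteq> ty P2 \<and> ty P2 \<noteq> ty P3 \<and> ty P3 \<noteq> ty P0" using four adj by blast
    then show False using nc celtic_intro unfolding P0_def P1_def P2_def P3_def by blast
  next
    assume "(P1, P2) \<in> S" "(P2, P3) \<in> S" "(P3, P0) \<in> S"
    then have "P1 \<in> crossings E \<and> P2 \<in> crossings E \<and> P3 \<in> crossings E \<and> P0 \<in> crossings E \<and>
      ty P1 \<noteq> ty P2 \<and> ty P2 \<noteq> ty P3 \<and> ty P3 \<noteq> ty P0 \<and> ty P0 \<noteq> ty P1" using four adj by blast
    then show False using nc celtic_intro unfolding P0_def P1_def P2_def P3_def by blast
  next
    assume "(P2, P3) \<in> S" "(P3, P0) \<in> S" "(P0, P1) \<in> S"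
    then have "P2 \<in> crossings E \<and> P3 \<in> crossings E \<and> P0 \<in> crossings E \<and> P1 \<in> crossings E \<and>
      ty P2 \<noteq> ty P3 \<and> ty P3 \<noteq> ty P0 \<and> ty P0 \<noteq> ty P1 \<and> ty P1 \<noteq> ty P2" using four adj by blast
    then show False using nc celtic_intro unfolding P0_def P1_def P2_def P3_def by blast
  next
    assume "(P3, P0) \<in> S" "(P0, P1) \<in> S" "(P1, P2) \<in> S"
    then have "P3 \<in> crossings E \<and> P0 \<in> crossings E \<and> P1 \<in> crossings E \<and> P2 \<in> crossings E \<and>
      ty P3 \<noteq> ty P0 \<and> ty P0 \<noteq> ty P1 \<and> ty P1 \<noteq> ty P2 \<and> ty P2 \<noteq> ty P3" using four adj by blast
    then show False using nc celtic_intro unfolding P0_def P1_def P2_def P3_def by blast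
  qed
qed



lemma cyc:
  assumes nc: "\<not> celtic_configuration E ty" and cy: "pc_is_cycle E ty K"
    and corn: "\<forall>w\<in>K. pc_corner E ty w"
  shows False
proof -
  obtain vs where dist: "distinct vs" and len: "length vs \<ge> 3" and sv: "set vs = K"
    and iff: "\<forall>a\<in>K. \<forall>b\<in>K. pc_adj E ty a b \<longleftrightarrow>
        (\<exists>i<length vs. {a, b} = {vs ! i, vs ! ((i + 1) mod length vs)})"
    using cy unfolding pc_is_cycle_def by blast
  define n where "n = length vs"
  define V where "V i = vs ! (i mod n)" for i
  have n3: "n \<ge> 3" using len n_def by simp
  have npos: "0 < length vs" using len by linarith
  have mlt: "i mod length vs < length vs" for i using npos by (rule mod_less_divisor)
  have VK: "V i \<in> K" for i
  proof -
    have "0 < length vs" using n3 unfolding n_def by linarith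
    then have "i mod n < length vs" unfolding n_def by (rule mod_less_divisor)
    then show ?thesis unfolding V_def using sv nth_mem by blast
  qed
  have adj: "pc_adj E ty (V i) (V (Suc i))" for i
  proof -
    have "(i mod n + 1) mod n = Suc i mod n" by (simp add: mod_Suc_eq)
    then have "\<exists>j<length vs. {V i, V (Suc i)} = {vs ! j, vs ! ((j + 1) mod length vs)}"
      using mlt unfolding V_def n_def by (intro exI[of _ "i mod length vs"]) auto
    then show ?thesis using iff VK by blast
  qed
  have neq2: "V i \<noteq> V (Suc (Suc i))" for i
  proof
    assume "V i = V (Suc (Suc i))"
    then have "i mod n = Suc (Suc i) mod n"
      unfolding V_def n_def using nth_eq_iff_index_eq[OF dist mlt mlt] by blast
    then have "n dvd (Suc (Suc i) - i)" using mod_eq_dvd_iff_nat[of i "Suc (Suc i)" n] by simp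
    then have "n dvd 2" by simp
    then have "n \<le> 2" by (rule dvd_imp_le) simp
    then show False using n3 by simp
  qed
  have perp: "perp_at (V (Suc i)) (V i) (V (Suc (Suc i)))" for i
  proof -
    obtain a b where ab: "a \<noteq> b" "{w. pc_adj E ty (V (Suc i)) w} = {a, b}" "perp_at (V (Suc i)) a b"
      using corn VK unfolding pc_corner_def by blast
    have "V i \<in> {a, b}" "V (Suc (Suc i)) \<in> {a, b}"
      using ab(2) adj pc_adj_sym by blast+
    then have "(a = V i \<and> b = V (Suc (Suc i))) \<or> (b = V i \<and> a = V (Suc (Suc i)))"
      using neq2[of i] by auto
    then show ?thesis using ab(3) perp_sym[of "V (Suc i)" a b] by auto
  qed
  define dx where "dx i = fst (V (Suc i)) - fst (V i)" for i
  define dy where "dy i = snd (V (Suc i)) - snd (V i)" for i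
  have unit: "(dx i = 1 \<and> dy i = 0) \<or> (dx i = -1 \<and> dy i = 0) \<or> (dx i = 0 \<and> dy i = 1) \<or> (dx i = 0 \<and> dy i = -1)" for i
    using pc_adj_cross[OF adj[of i]] unfolding ladj_iff dx_def dy_def by auto
  have dot: "dx i * dx (Suc i) + dy i * dy (Suc i) = 0" for i
  proof -
    have "(fst (V i) - fst (V (Suc i))) * (fst (V (Suc (Suc i))) - fst (V (Suc i))) +
          (snd (V i) - snd (V (Suc i))) * (snd (V (Suc (Suc i))) - snd (V (Suc i))) = 0"
      using perp[of i] unfolding perp_at_def by blast
    then show ?thesis unfolding dx_def dy_def by (simp add: algebra_simps)
  qed
  have per2: "dx (Suc (Suc i)) = dx i \<and> dy (Suc (Suc i)) = dy i" for i
  proof (rule ccontr)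
    assume a: "\<not> ?thesis"
    have opp: "dx (Suc (Suc i)) = - dx i \<and> dy (Suc (Suc i)) = - dy i"
      using a unit[of i] unit[of "Suc i"] unit[of "Suc (Suc i)"] dot[of i] dot[of "Suc i"] by auto
    let ?A = "V (Suc i)" and ?B = "V i" and ?D = "V (Suc (Suc i))" and ?C = "V (Suc (Suc (Suc i)))"
    have C: "?C = (fst ?B + fst ?D - fst ?A, snd ?B + snd ?D - snd ?A)"
      using opp unfolding dx_def dy_def by (simp add: prod_eq_iff algebra_simps)
    have X: "?A \<in> crossings E" "?B \<in> crossings E" "?C \<in> crossings E" "?D \<in> crossings E"
      using pc_adj_cross[OF adj[of i]] pc_adj_cross[OF adj[of "Suc i"]] pc_adj_cross[OF adj[of "Suc (Suc i)"]]
      by blast+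
    have T: "ty ?A \<noteq> ty ?B" "ty ?A \<noteq> ty ?D" "ty ?C \<noteq> ty ?B \<or> ty ?C \<noteq> ty ?D"
      using pc_adj_ty[OF adj[of i]] pc_adj_ty[OF adj[of "Suc i"]] pc_adj_ty[OF adj[of "Suc (Suc i)"]]
      by auto
    have "celtic_configuration E ty" by (rule celtic_sq[OF X perp[of i] C T])
    then show False using nc by blast
  qed
  have ev: "dx (2 * k) = dx 0 \<and> dy (2 * k) = dy 0 \<and> dx (Suc (2 * k)) = dx 1 \<and> dy (Suc (2 * k)) = dy 1" for k
  proof (induction k)
    case 0 then show ?case by simp
  next
    case (Suc k)
    have "2 * Suc k = Suc (Suc (2 * k))" by simp
    then show ?case using Suc per2[of "2 * k"] per2[of "Suc (2 * k)"] by simp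
  qed
  have pos: "fst (V (2 * k)) = fst (V 0) + int k * (dx 0 + dx 1) \<and>
             snd (V (2 * k)) = snd (V 0) + int k * (dy 0 + dy 1)" for k
  proof (induction k)
    case 0 then show ?case by simp
  next
    case (Suc k)
    have e: "2 * Suc k = Suc (Suc (2 * k))" by simp
    have "fst (V (Suc (Suc (2 * k)))) = fst (V (2 * k)) + dx (2 * k) + dx (Suc (2 * k))"
         "snd (V (Suc (Suc (2 * k)))) = snd (V (2 * k)) + dy (2 * k) + dy (Suc (2 * k))"
      unfolding dx_def dy_def by simp_all
    then show ?case unfolding e using Suc ev[of k] by (simp add: algebra_simps)
  qed
  have "V (2 * n) = V 0" unfolding V_def by simp
  then have "int n * (dx 0 + dx 1) = 0" "int n * (dy 0 + dy 1) = 0" using pos[of n] by simp_all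
  then have "dx 0 + dx 1 = 0" "dy 0 + dy 1 = 0" using n3 by simp_all
  then show False using unit[of 0] unit[of 1] dot[of 0] by auto
qed


theorem lemma3p8:
  fixes E :: "pt set set" and ty :: "pt \<Rightarrow> ctype"
  assumes "lattice_diagram E"
  shows "(\<forall>c d. problem_crossing E ty c \<and> problem_crossing E ty d \<and> cadj E c d \<and>
            \<not> pc_adj E ty c d \<longrightarrow>
            \<not> bad_neighbor E ty c d \<and> \<not> bad_neighbor E ty d c \<and> ty c = ty d)
       \<and> (\<not> celtic_configuration E ty \<longrightarrow>
            (\<forall>v\<in>pc_vert E ty. pc_degree E ty v \<le> 2) \<and>
            pc_deleted_square_free E ty \<and>
            (\<forall>v\<in>pc_vert E ty. pc_is_cycle E ty (pc_component E ty v) \<longrightarrow>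
               (\<exists>w\<in>pc_component E ty v. \<not> pc_corner E ty w)))"
proof (rule conjI)
  show "\<forall>c d. problem_crossing E ty c \<and> problem_crossing E ty d \<and> cadj E c d \<and>
            \<not> pc_adj E ty c d \<longrightarrow>
            \<not> bad_neighbor E ty c d \<and> \<not> bad_neighbor E ty d c \<and> ty c = ty d"
    using part1 by blast
next
  show "\<not> celtic_configuration E ty \<longrightarrow>
            (\<forall>v\<in>pc_vert E ty. pc_degree E ty v \<le> 2) \<and>
            pc_deleted_square_free E ty \<and>
            (\<forall>v\<in>pc_vert E ty. pc_is_cycle E ty (pc_component E ty v) \<longrightarrow>
               (\<exists>w\<in>pc_component E ty v. \<not> pc_corner E ty w))"
  proof (intro impI conjI ballI)
    fix v assume nc: "\<not> celtic_configuration E ty"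
  show "pc_degree E ty v \<le> 2" unfolding pc_degree_def by (rule deg[OF nc])
next
  assume nc: "\<not> celtic_configuration E ty"
  show "pc_deleted_square_free E ty" by (rule dsq[OF nc])
next
  fix v assume nc: "\<not> celtic_configuration E ty"
    and cy: "pc_is_cycle E ty (pc_component E ty v)"
  show "\<exists>w\<in>pc_component E ty v. \<not> pc_corner E ty w"
  proof (rule ccontr)
    assume "\<not> ?thesis"
    then have "\<forall>w\<in>pc_component E ty v. pc_corner E ty w" by blast
    then show False using cyc[OF nc cy] by blast
  qed
qed
qed

end
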